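(* Fix integers $m\ge d\ge1$, $\lambda=d/m$, and $\sigma>0$. Let $p_1,p_2,\dots$ be monic polynomials of degree $d$, $p_i(x)=\prod_{j=1}^d(x-r_{i,j}^2)$ with $r_{i,j}$ real, such that $\frac1d\sum_j r_{i,j}^2\le\sigma^2$ for all $i$. For $N\ge1$ let $P_N=p_1\boxplus_{d,\lambda}\cdots\boxplus_{d,\lambda}p_N$ and let $\widetilde P_N$ be the monic polynomial of degree $2d$ whose roots are the roots of $\mathbb{S}P_N$ multiplied by $1/N$. Then $\widetilde P_N\to x^{2d}$ (coefficientwise) as $N\to\infty$.
   Context: $(p\boxplus_{d,\lambda}q)(x)=\sum_{k=0}^dx^{d-k}(-1)^k\sum_{i+j=k}\frac{(d-i)!(d-j)!}{d!(d-k)!}\frac{(m-i)!(m-j)!}{m!(m-k)!}a_ib_j$ for $p=\sum(-1)^ia_ix^{d-i}$, $q=\sum(-1)^ib_ix^{d-i}$; this operation is associative, bilinear and preserves monic polynomials with nonnegative real roots. $\mathbb{S}P(x)=P(x^2)$. *)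

theory Defs
  imports "HOL-Computational_Algebra.Polynomial" Complex_Main
begin

text \<open>Rectangular finite free convolution of degree d with parameter lambda = d/m.
  Writing p = sum (-1)^i a_i x^(d-i), i.e. a_i = (-1)^i coeff p (d-i).\<close>
definition rect_conv :: "nat \<Rightarrow> nat \<Rightarrow> real poly \<Rightarrow> real poly \<Rightarrow> real poly" where
  "rect_conv d m p q =
     (\<Sum>k\<le>d. monom ((-1)^k *
        (\<Sum>i\<le>k. (fact (d-i) * fact (d-(k-i)) / (fact d * fact (d-k))) *
                  (fact (m-i) * fact (m-(k-i)) / (fact m * fact (m-k))) *
                  (((-1)^i * coeff p (d-i)) * ((-1)^(k-i) * coeff q (d-(k-i)))))) (d-k))"

text \<open>P_N = p_1 boxplus ... boxplus p_N (left-bracketed; the operation is associative).\<close>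
fun rect_conv_iter :: "nat \<Rightarrow> nat \<Rightarrow> (nat \<Rightarrow> real poly) \<Rightarrow> nat \<Rightarrow> real poly" where
  "rect_conv_iter d m p 0 = p 1"
| "rect_conv_iter d m p (Suc 0) = p 1"
| "rect_conv_iter d m p (Suc (Suc n)) = rect_conv d m (rect_conv_iter d m p (Suc n)) (p (Suc (Suc n)))"

definition sym_poly :: "real poly \<Rightarrow> real poly" where
  "sym_poly P = pcompose P [:0, 0, 1:]"

text \<open>Monic polynomial of degree deg Q whose roots are those of the monic Q scaled by 1/N:
  N^(-deg Q) * Q(N x).\<close>
definition root_scale :: "nat \<Rightarrow> real poly \<Rightarrow> real poly" where
  "root_scale N Q = smult (1 / real N ^ degree Q) (pcompose Q [:0, real N:])"

end

theory Submission
  imports Defs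
begin

lemma coeff_sym_poly:
  "coeff (pcompose P [:0, 0, 1:]) n = (if even n then coeff P (n div 2) else (0::real))"
proof (induction P arbitrary: n)
  case 0 then show ?case by simp
next
  case (pCons a p)
  have e: "[:0, 0, 1:] * pcompose p [:0, 0, 1:] = pCons 0 (pCons 0 (pcompose p [:0, 0, 1:]))"
    by simp
  show ?case
  proof (cases n)
    case 0 then show ?thesis by (simp add: pcompose_pCons e)
  next
    case (Suc n') then show ?thesis
      using pCons.IH[of "n' - 1"]
      by (cases n') (auto simp: pcompose_pCons e coeff_pCons split: nat.splits)
  qed
qed

lemma fact_ratio_le:
  assumes "i \<le> a" "a \<le> b"
  shows "fact a * fact (b - i) \<le> (fact b * fact (a - i) :: nat)"
  using assms(2)
proof (induction b rule: dec_induct)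
  case base then show ?case by simp
next
  case (step b)
  have "Suc b - i = Suc (b - i)" using assms step by simp
  then have "fact a * fact (Suc b - i) = (fact a * fact (b - i)) * Suc (b - i)" by (simp add: algebra_simps)
  also have "\<dots> \<le> (fact b * fact (a - i)) * Suc b"
    using step.IH using mult_le_mono[OF step.IH, of "Suc (b - i)" "Suc b"] by simp
  also have "\<dots> = fact (Suc b) * fact (a - i)" by (simp add: algebra_simps)
  finally show ?case .
qed

lemma weight_le1:
  assumes "i \<le> k" "k \<le> d"
  shows "fact (d-i) * fact (d-(k-i)) / (fact d * fact (d-k)) \<le> (1::real)"
proof -
  have "fact (d-(k-i)) * fact (d-i) \<le> (fact d * fact (d-(k-i)-i) :: nat)"
    using fact_ratio_le[of i "d-(k-i)" d] assms by simp
  moreover have "d-(k-i)-i = d - k" using assms by simp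
  ultimately have "real (fact (d-i) * fact (d-(k-i))) \<le> real (fact d * fact (d-k))"
    by (simp only: mult.commute of_nat_le_iff)
  then show ?thesis by (simp add: divide_le_eq_1 )
qed

definition aco :: "nat \<Rightarrow> real poly \<Rightarrow> nat \<Rightarrow> real" where
  "aco d q i = (-1)^i * coeff q (d-i)"

definition W :: "nat \<Rightarrow> nat \<Rightarrow> nat \<Rightarrow> nat \<Rightarrow> real" where
  "W d m i k = (fact (d-i) * fact (d-(k-i)) / (fact d * fact (d-k))) *
                  (fact (m-i) * fact (m-(k-i)) / (fact m * fact (m-k)))"

lemma coeff_rect_conv:
  "coeff (rect_conv d m p q) n = (if n \<le> d then (-1)^(d-n) *
      (\<Sum>i\<le>d-n. W d m i (d-n) * aco d p i * aco d q (d-n-i)) else 0)"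
proof -
  have "coeff (rect_conv d m p q) n = (\<Sum>k\<le>d. if d - k = n then (-1)^k *
        (\<Sum>i\<le>k. W d m i k * aco d p i * aco d q (k-i)) else 0)"
    unfolding rect_conv_def coeff_sum coeff_monom W_def aco_def
    by (intro sum.cong refl) (auto simp: mult_ac)
  also have "\<dots> = (\<Sum>k\<le>d. if k = d - n \<and> n \<le> d then (-1)^k *
        (\<Sum>i\<le>k. W d m i k * aco d p i * aco d q (k-i)) else 0)"
    by (intro sum.cong refl) auto
  also have "\<dots> = (if n \<le> d then (-1)^(d-n) *
      (\<Sum>i\<le>d-n. W d m i (d-n) * aco d p i * aco d q (d-n-i)) else 0)"
    by (cases "n \<le> d") (simp_all add: sum.delta')
  finally show ?thesis .
qed

lemma aco_rect_conv:
  assumes "k \<le> d"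
  shows "aco d (rect_conv d m p q) k = (\<Sum>i\<le>k. W d m i k * aco d p i * aco d q (k-i))"
proof -
  have "aco d (rect_conv d m p q) k = (-1)^k * ((-1)^k *
      (\<Sum>i\<le>k. W d m i k * aco d p i * aco d q (k-i)))"
    unfolding aco_def[of d "rect_conv d m p q"] coeff_rect_conv using assms by simp
  also have "\<dots> = (\<Sum>i\<le>k. W d m i k * aco d p i * aco d q (k-i))"
    by (simp flip: mult.assoc power_add add: power_even_eq[symmetric])
  finally show ?thesis .
qed

lemma W_bounds:
  assumes "i \<le> k" "k \<le> d" "d \<le> m"
  shows "0 \<le> W d m i k" "W d m i k \<le> 1"
proof -
  show "0 \<le> W d m i k" unfolding W_def by simp
  have a: "fact (d-i) * fact (d-(k-i)) / (fact d * fact (d-k)) \<le> (1::real)"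
    using weight_le1 assms by simp
  have b: "fact (m-i) * fact (m-(k-i)) / (fact m * fact (m-k)) \<le> (1::real)"
    using weight_le1[of i k m] assms by simp
  show "W d m i k \<le> 1" unfolding W_def
    using mult_mono[OF a b] by simp
qed

lemma coeff_mult_lin:
  fixes Q :: "real poly"
  shows "coeff (Q * [:-c, 1:]) l = - c * coeff Q l + (case l of 0 \<Rightarrow> 0 | Suc l' \<Rightarrow> coeff Q l')"
proof -
  have "Q * [:-c, 1:] = smult (-c) Q + pCons 0 Q"
    by (simp add: mult_pCons_right)
  then show ?thesis by (simp add: coeff_pCons split: nat.splits)
qed

lemma prod_lin_coeffs:
  fixes s :: "nat \<Rightarrow> real"
  assumes s: "\<And>j. s j \<ge> 0"
  shows "(\<forall>l>n. coeff (\<Prod>j=1..n. [:-s j, 1:]) l = 0) \<and> coeff (\<Prod>j=1..n. [:-s j, 1:]) n = 1 \<and>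
    (\<forall>i l. i + l = n \<longrightarrow> 0 \<le> (-1)^i * coeff (\<Prod>j=1..n. [:-s j, 1:]) l \<and>
        (-1)^i * coeff (\<Prod>j=1..n. [:-s j, 1:]) l \<le> (\<Prod>j=1..n. 1 + s j))"
proof (induction n)
  case 0 then show ?case by (auto simp: coeff_1)
next
  case (Suc n)
  define Q where "Q = (\<Prod>j=1..n. [:-s j, 1:])"
  define M where "M = (\<Prod>j=1..n. 1 + s j)"
  have M0: "M \<ge> 0" unfolding M_def using s by (intro prod_nonneg) (auto intro: add_nonneg_nonneg)
  have M1: "M \<ge> 1" unfolding M_def using s by (intro prod_ge_1) auto
  have PQ: "(\<Prod>j=1..Suc n. [:-s j, 1:]) = Q * [:-s (Suc n), 1:]"
    unfolding Q_def by (simp add: prod.nat_ivl_Suc' mult.commute)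
  have PM: "(\<Prod>j=1..Suc n. 1 + s j) = M * (1 + s (Suc n))"
    unfolding M_def by (simp add: prod.nat_ivl_Suc' mult.commute)
  have IH1: "\<And>l. l > n \<Longrightarrow> coeff Q l = 0" and IH2: "coeff Q n = 1"
    and IH3: "\<And>i l. i + l = n \<Longrightarrow> 0 \<le> (-1)^i * coeff Q l \<and> (-1)^i * coeff Q l \<le> M"
    using Suc.IH unfolding Q_def M_def by auto
  let ?c = "s (Suc n)"
  have c0: "?c \<ge> 0" using s by simp
  have A: "\<forall>l>Suc n. coeff (Q * [:-?c, 1:]) l = 0"
    by (auto simp: coeff_mult_lin coeff_pCons IH1 split: nat.splits)
  have B: "coeff (Q * [:-?c, 1:]) (Suc n) = 1"
    by (simp add: coeff_mult_lin IH1 IH2)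
  have C: "0 \<le> (-1)^i * coeff (Q * [:-?c, 1:]) l \<and>
        (-1)^i * coeff (Q * [:-?c, 1:]) l \<le> M * (1 + ?c)" if il: "i + l = Suc n" for i l
  proof (cases l)
    case 0
    then have i: "i = Suc n" using il by simp
    define x where "x = (-1)^n * coeff Q 0"
    have v: "(-1)^i * coeff (Q * [:-?c, 1:]) l = ?c * x"
      using 0 i unfolding x_def by (simp add: coeff_mult_lin)
    have hx: "0 \<le> x" "x \<le> M" using IH3[of n 0] unfolding x_def by simp_all
    have "0 \<le> ?c * x" using hx c0 by simp
    moreover have "?c * x \<le> ?c * M" using hx c0 by (intro mult_left_mono) auto
    moreover have "M * (1 + ?c) = M + ?c * M" by (simp add: algebra_simps)
    ultimately show ?thesis unfolding v using M0 by linarith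
  next
    case (Suc l')
    show ?thesis
    proof (cases i)
      case 0
      then have "l = Suc n" using il by simp
      have "M \<le> M * (1 + ?c)" using M0 c0 by (simp add: algebra_simps)
      moreover have "(-1)^i * coeff (Q * [:-?c, 1:]) l = 1"
        using 0 \<open>l = Suc n\<close> by (simp add: coeff_mult_lin IH1 IH2)
      ultimately show ?thesis using M1 by linarith
    next
      case (Suc i')
      have e: "(-1)^i * coeff (Q * [:-?c, 1:]) l = ?c * ((-1)^i' * coeff Q l) + (-1)^i * coeff Q l'"
        using Suc \<open>l = Suc l'\<close> by (simp add: coeff_mult_lin algebra_simps)
      have h1: "0 \<le> (-1)^i' * coeff Q l \<and> (-1)^i' * coeff Q l \<le> M"
        using IH3[of i' l] il Suc by simp
      have h2: "0 \<le> (-1)^i * coeff Q l' \<and> (-1)^i * coeff Q l' \<le> M"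
        using IH3[of i l'] il \<open>l = Suc l'\<close> by simp
      have "?c * ((-1)^i' * coeff Q l) \<le> ?c * M" using h1 c0 by (intro mult_left_mono) auto
      moreover have "0 \<le> ?c * ((-1)^i' * coeff Q l)" using h1 c0 by simp
      moreover have "M * (1 + ?c) = M + ?c * M" by (simp add: algebra_simps)
      ultimately show ?thesis unfolding e using h2 by linarith
    qed
  qed
  show ?case unfolding PQ PM using A B C by blast
qed

lemma iter_bounds:
  fixes B :: real
  assumes dm: "d \<le> m" and B1: "B \<ge> 1"
    and hp1: "\<And>n l. n \<ge> 1 \<Longrightarrow> l > d \<Longrightarrow> coeff (p n) l = 0"
    and hp2: "\<And>n. n \<ge> 1 \<Longrightarrow> coeff (p n) d = 1"
    and hp3: "\<And>n i. n \<ge> 1 \<Longrightarrow> i \<le> d \<Longrightarrow> 0 \<le> aco d (p n) i \<and> aco d (p n) i \<le> B^i"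
  shows "(\<forall>l>d. coeff (rect_conv_iter d m p (Suc n)) l = 0) \<and> coeff (rect_conv_iter d m p (Suc n)) d = 1 \<and>
    (\<forall>k\<le>d. 0 \<le> aco d (rect_conv_iter d m p (Suc n)) k \<and>
       aco d (rect_conv_iter d m p (Suc n)) k \<le> B^k * real ((n + k) choose k))"
proof (induction n)
  case 0 then show ?case using hp1[of 1] hp2[of 1] hp3[of 1] by simp
next
  case (Suc n)
  define P where "P = rect_conv_iter d m p (Suc n)"
  define q where "q = p (Suc (Suc n))"
  have e: "rect_conv_iter d m p (Suc (Suc n)) = rect_conv d m P q" unfolding P_def q_def by simp
  have I1: "\<And>l. l > d \<Longrightarrow> coeff P l = 0" and I2: "coeff P d = 1"
    and I3: "\<And>k. k \<le> d \<Longrightarrow> 0 \<le> aco d P k \<and> aco d P k \<le> B^k * real ((n + k) choose k)"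
    using Suc.IH unfolding P_def by auto
  have q1: "coeff q d = 1" unfolding q_def using hp2 by simp
  have q3: "\<And>i. i \<le> d \<Longrightarrow> 0 \<le> aco d q i \<and> aco d q i \<le> B^i" unfolding q_def using hp3 by simp
  have A: "\<forall>l>d. coeff (rect_conv d m P q) l = 0" by (simp add: coeff_rect_conv)
  have B: "coeff (rect_conv d m P q) d = 1"
    by (simp add: coeff_rect_conv W_def aco_def I2 q1)
  have C: "0 \<le> aco d (rect_conv d m P q) k \<and>
       aco d (rect_conv d m P q) k \<le> B^k * real ((Suc n + k) choose k)" if k: "k \<le> d" for k
  proof -
    have t0: "0 \<le> W d m i k * aco d P i * aco d q (k-i)" if "i \<in> {..k}" for i
      using W_bounds[of i k d m] I3[of i] q3[of "k-i"] that k dm by simp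
    have t1: "W d m i k * aco d P i * aco d q (k-i) \<le> B^k * real ((n + i) choose i)"
      if "i \<in> {..k}" for i
    proof -
      have w: "0 \<le> W d m i k" "W d m i k \<le> 1" using W_bounds[of i k d m] that k dm by auto
      have x: "0 \<le> aco d P i" "aco d P i \<le> B^i * real ((n + i) choose i)" using I3[of i] that k by auto
      have y: "0 \<le> aco d q (k-i)" "aco d q (k-i) \<le> B^(k-i)" using q3[of "k-i"] k by auto
      have "W d m i k * aco d P i * aco d q (k-i) \<le> 1 * (B^i * real ((n + i) choose i)) * B^(k-i)"
        using w x y by (intro mult_mono) (auto intro: mult_nonneg_nonneg)
      also have "\<dots> = B^k * real ((n + i) choose i)"
        using that by (simp add: power_add[symmetric] algebra_simps)
      finally show ?thesis .
    qed
    have "aco d (rect_conv d m P q) k = (\<Sum>i\<le>k. W d m i k * aco d P i * aco d q (k-i))"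
      using aco_rect_conv k by blast
    moreover have "(\<Sum>i\<le>k. W d m i k * aco d P i * aco d q (k-i)) \<le> (\<Sum>i\<le>k. B^k * real ((n + i) choose i))"
      using t1 by (rule sum_mono)
    moreover have "(\<Sum>i\<le>k. B^k * real ((n + i) choose i)) = B^k * real ((Suc n + k) choose k)"
      by (simp add: sum_distrib_left[symmetric] sum_choose_lower flip: of_nat_sum)
    moreover have "0 \<le> (\<Sum>i\<le>k. W d m i k * aco d P i * aco d q (k-i))"
      using t0 by (rule sum_nonneg)
    ultimately show ?thesis by simp
  qed
  show ?case unfolding e using A B C by blast
qed

lemma pbounds:
  fixes d :: nat and \<sigma> :: real and p :: "nat \<Rightarrow> real poly" and r :: "nat \<Rightarrow> nat \<Rightarrow> real"
  assumes "1 \<le> d"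
    and hp: "\<And>i. i \<ge> 1 \<Longrightarrow> p i = (\<Prod>j=1..d. [:- ((r i j)^2), 1:])"
    and hs: "\<And>i. i \<ge> 1 \<Longrightarrow> (1 / real d) * (\<Sum>j=1..d. (r i j)^2) \<le> \<sigma>^2"
    and n: "n \<ge> 1"
  shows "(\<forall>l>d. coeff (p n) l = 0) \<and> coeff (p n) d = 1 \<and>
    (\<forall>i\<le>d. 0 \<le> aco d (p n) i \<and> aco d (p n) i \<le> exp (real d * \<sigma>^2) ^ i)"
proof -
  let ?B = "exp (real d * \<sigma>^2)"
  have L: "(\<forall>l>d. coeff (p n) l = 0) \<and> coeff (p n) d = 1 \<and>
    (\<forall>i l. i + l = d \<longrightarrow> 0 \<le> (-1)^i * coeff (p n) l \<and>
        (-1)^i * coeff (p n) l \<le> (\<Prod>j=1..d. 1 + (r n j)^2))"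
    using prod_lin_coeffs[of "\<lambda>j. (r n j)^2" d] hp[OF n] by simp
  have "(\<Prod>j=1..d. 1 + (r n j)^2) \<le> (\<Prod>j=1..d. exp ((r n j)^2))"
    by (intro prod_mono) (auto simp: add_nonneg_nonneg)
  also have "\<dots> = exp (\<Sum>j=1..d. (r n j)^2)" by (simp add: exp_sum)
  also have "\<dots> \<le> ?B"
  proof -
    have "(\<Sum>j=1..d. (r n j)^2) \<le> real d * \<sigma>^2"
      using hs[OF n] assms(1) by (simp add: field_simps)
    then show ?thesis by simp
  qed
  finally have M: "(\<Prod>j=1..d. 1 + (r n j)^2) \<le> ?B" .
  have B1: "?B \<ge> 1" by simp
  have "0 \<le> aco d (p n) i \<and> aco d (p n) i \<le> ?B ^ i" if i: "i \<le> d" for i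
  proof (cases i)
    case 0 then show ?thesis using L by (simp add: aco_def)
  next
    case (Suc i')
    have "?B \<le> ?B ^ i" using B1 Suc by (metis One_nat_def Suc_le_eq power_increasing power_one_right zero_less_Suc)
    then show ?thesis using L[THEN conjunct2, THEN conjunct2, rule_format, of i "d-i"] i M
      unfolding aco_def by auto
  qed
  then show ?thesis using L by blast
qed

theorem mainTheorem7:
  fixes d m :: nat and \<sigma> :: real
    and p :: "nat \<Rightarrow> real poly" and r :: "nat \<Rightarrow> nat \<Rightarrow> real"
  assumes "1 \<le> d" and "d \<le> m" and "\<sigma> > 0"
    and "\<And>i. i \<ge> 1 \<Longrightarrow> p i = (\<Prod>j=1..d. [:- ((r i j)^2), 1:])"
    and "\<And>i. i \<ge> 1 \<Longrightarrow> (1 / real d) * (\<Sum>j=1..d. (r i j)^2) \<le> \<sigma>^2"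
  shows "\<forall>k. (\<lambda>N. coeff (root_scale N (sym_poly (rect_conv_iter d m p N))) k)
              \<longlonglongrightarrow> coeff (monom 1 (2*d)) k"
proof
  fix k
  define B where "B = exp (real d * \<sigma>^2)"
  have B1: "B \<ge> 1" unfolding B_def by simp
  have IB: "(\<forall>l>d. coeff (rect_conv_iter d m p (Suc n)) l = 0) \<and> coeff (rect_conv_iter d m p (Suc n)) d = 1 \<and>
    (\<forall>k\<le>d. 0 \<le> aco d (rect_conv_iter d m p (Suc n)) k \<and>
       aco d (rect_conv_iter d m p (Suc n)) k \<le> B^k * real ((n + k) choose k))" for n
  proof -
    have PB: "(\<forall>l>d. coeff (p n) l = 0) \<and> coeff (p n) d = 1 \<and>
      (\<forall>i\<le>d. 0 \<le> aco d (p n) i \<and> aco d (p n) i \<le> B ^ i)" if "n \<ge> 1" for n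
      unfolding B_def by (rule pbounds[of d p r \<sigma> n]) (use assms that in auto)
    show ?thesis by (rule iter_bounds[OF assms(2) B1]) (use PB in blast)+
  qed
  define f where "f N = coeff (root_scale N (sym_poly (rect_conv_iter d m p N))) k" for N
  have fval: "f (Suc n) = (if even k then real (Suc n) ^ k / real (Suc n) ^ (2*d) *
       coeff (rect_conv_iter d m p (Suc n)) (k div 2) else 0)" for n
  proof -
    let ?Q = "rect_conv_iter d m p (Suc n)"
    have "degree ?Q = d"
      using IB[of n] by (intro antisym degree_le le_degree) auto
    then have dg: "degree (sym_poly ?Q) = 2 * d" by (simp add: sym_poly_def degree_pcompose)
    show ?thesis unfolding f_def root_scale_def dg
      by (simp add: coeff_pcompose_linear sym_poly_def coeff_sym_poly)
  qed
  show "f \<longlonglongrightarrow> coeff (monom 1 (2*d)) k"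
  proof (cases "k \<ge> 2 * d")
    case True
    have "f (Suc n) = coeff (monom 1 (2*d)) k" for n
    proof (cases "k = 2 * d")
      case True
      have "coeff (rect_conv_iter d m p (Suc n)) d = 1" using IB[of n, THEN conjunct2, THEN conjunct1] .
      moreover have "real (Suc n) ^ k / real (Suc n) ^ (2*d) = 1" using True by simp
      ultimately show ?thesis using True by (simp only: fval) simp
    next
      case False
      then have "k div 2 > d \<or> odd k" using \<open>k \<ge> 2 * d\<close> by presburger
      moreover have "coeff (monom (1::real) (2*d)) k = 0" using False by (simp add: coeff_monom)
      moreover have "\<forall>l>d. coeff (rect_conv_iter d m p (Suc n)) l = 0" using IB[of n, THEN conjunct1] .
      ultimately show ?thesis by (simp only: fval) auto
    qed
    then have "(\<lambda>n. f (Suc n)) = (\<lambda>n. coeff (monom 1 (2*d)) k)" by (rule ext)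
    then have "(\<lambda>n. f (Suc n)) \<longlonglongrightarrow> coeff (monom 1 (2*d)) k" by (simp only: tendsto_const)
    then show ?thesis by (rule LIMSEQ_imp_Suc)
  next
    case False
    have t0: "coeff (monom (1::real) (2*d)) k = 0" using False by (simp add: coeff_monom)
    show ?thesis
    proof (cases "even k")
      case False
      then have "(\<lambda>n. f (Suc n)) = (\<lambda>n. 0)" by (simp add: fval)
      then have "(\<lambda>n. f (Suc n)) \<longlonglongrightarrow> 0" by (simp only: tendsto_const)
      then show ?thesis unfolding t0 by (rule LIMSEQ_imp_Suc)
    next
      case True
      define j where "j = k div 2"
      define t where "t = d - j"
      have kj: "k = 2 * j" using True j_def by simp
      have t1: "t \<ge> 1" "t \<le> d" "d - t = j" and dj: "2 * d = k + 2 * t"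
        using \<open>\<not> k \<ge> 2 * d\<close> kj unfolding t_def by auto
      define c where "c = B^t * real t ^ t"
      have bnd: "\<bar>f (Suc n)\<bar> \<le> c / real (Suc n)" for n
      proof -
        define N where "N = real (Suc n)"
        have N1: "N \<ge> 1" unfolding N_def by simp
        let ?Q = "rect_conv_iter d m p (Suc n)"
        have a: "0 \<le> aco d ?Q t" "aco d ?Q t \<le> B^t * real ((n + t) choose t)"
          using IB[of n] t1 by auto
        have cj: "coeff ?Q j = (-1)^t * aco d ?Q t"
          unfolding aco_def using t1 by (simp flip: mult.assoc power_add add: power_even_eq[symmetric])
        have fv: "f (Suc n) = (-1)^t * (aco d ?Q t / N ^ (2*t))"
        proof -
          have "f (Suc n) = N ^ k / N ^ (2 * d) * coeff ?Q j"
            using True unfolding fval N_def j_def by simp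
          also have "N ^ k / N ^ (2 * d) = 1 / N ^ (2*t)"
            unfolding dj power_add using N1 by simp
          finally show ?thesis unfolding cj by simp
        qed
        have "real ((n + t) choose t) \<le> real ((n + t) ^ t)"
          by (subst of_nat_le_iff) (rule binomial_le_pow, simp)
        also have "\<dots> \<le> (N * real t) ^ t"
        proof -
          have "real (n + t) \<le> N * real t"
          proof -
            have "n * 1 \<le> n * t" by (rule mult_le_mono2) (use t1 in simp)
            then have "n + t \<le> Suc n * t" by simp
            then have "real (n + t) \<le> real (Suc n * t)" by (rule of_nat_mono)
            then show ?thesis unfolding N_def by (simp only: of_nat_mult)
          qed
          then show ?thesis by (simp add: power_mono)
        qed
        finally have ch: "real ((n + t) choose t) \<le> N ^ t * real t ^ t" by (simp add: power_mult_distrib)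
        have "\<bar>f (Suc n)\<bar> = aco d ?Q t / N ^ (2*t)" unfolding fv using a N1 by (simp add: abs_mult)
        also have "\<dots> \<le> B^t * (N ^ t * real t ^ t) / N ^ (2*t)"
        proof -
          have "B^t * real ((n + t) choose t) \<le> B^t * (N ^ t * real t ^ t)"
            using ch B1 by (intro mult_left_mono) auto
          then have "aco d ?Q t \<le> B^t * (N ^ t * real t ^ t)" using a(2) by linarith
          then show ?thesis using N1 by (intro divide_right_mono) auto
        qed
        also have "\<dots> = c / N ^ t"
        proof -
          have e2: "N^(2*t) = N^t * N^t" by (simp add: mult_2 power_add)
          have "N ^ t > 0" using N1 by simp
          then show ?thesis unfolding c_def e2 by (simp add: field_simps)
        qed
        also have "\<dots> \<le> c / N"
        proof -
          have "N \<le> N ^ t" using N1 t1 by (metis power_increasing power_one_right)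
          moreover have "c \<ge> 0" unfolding c_def using B1 by simp
          ultimately show ?thesis using N1 by (intro divide_left_mono) auto
        qed
        finally show ?thesis unfolding N_def .
      qed
      have g: "(\<lambda>n. c / real (Suc n)) \<longlonglongrightarrow> 0"
        using LIMSEQ_Suc[OF lim_const_over_n[of c]] by simp
      have "(\<lambda>n. f (Suc n)) \<longlonglongrightarrow> 0"
        by (rule tendsto_norm_zero_cancel, rule real_tendsto_sandwich[where f="\<lambda>_. 0", OF _ _ tendsto_const g])
          (use bnd in auto)
      then show ?thesis unfolding t0 by (rule LIMSEQ_imp_Suc)
    qed
  qed
qed

end
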